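(* Let $S\subseteq\{0,1\}^n$ and $f:S\to\{0,1\}$. Then for any $\epsilon<1/2$, $$\mathsf{L}^{\epsilon}(f)\ \ge\ \big((1-2\epsilon)\,\mathsf{sumPI}(f)\big)^2.$$
   Context: For $g:S\to\{0,1\}$ with $S\subseteq\{0,1\}^n$, $\mathsf{L}(g)$ denotes the minimum number of leaves of a formula over $\{\wedge,\vee\}$ with literals $x_i,\neg x_i$ at the leaves that agrees with $g$ on $S$. A function $f:S\to\{0,1\}$ is $\epsilon$-approximated by a set of functions $\{f_j\}_{j\in J}$, $f_j:S\to\{0,1\}$, if there is a probability distribution $\alpha$ on $J$ such that for every $x\in S$, $\Pr_{j\sim\alpha}[f(x)=f_j(x)]\ge 1-\epsilon$. $\mathsf{L}^\epsilon(f)$ is the least $s$ such that $f$ is $\epsilon$-approximated by a set of functions $\{f_j\}$ with $\max_j \mathsf{L}(f_j)\le s$. With $p=\{p_x:x\in S\}$ ranging over families of probability distributions on $[n]$, $$\mathsf{sumPI}(f)=\min_{p}\ \max_{x,y\in S:\ f(x)\neq f(y)} \frac{1}{\sum_{i:\,x_i\neq y_i}\sqrt{p_x(i)p_y(i)}}.$$ *)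

theory Defs
  imports "HOL-Probability.Probability"
begin

text \<open>Points of the Boolean cube: bool lists of length n; coordinate i (0-based, i < n) is x ! i.\<close>

datatype form = Lit nat bool | FAnd form form | FOr form form

fun evalf :: "form \<Rightarrow> bool list \<Rightarrow> bool" where
  "evalf (Lit i b) x = (if b then x ! i else \<not> x ! i)"
| "evalf (FAnd a c) x = (evalf a x \<and> evalf c x)"
| "evalf (FOr a c) x = (evalf a x \<or> evalf c x)"

fun leaves :: "form \<Rightarrow> nat" where
  "leaves (Lit i b) = 1"
| "leaves (FAnd a c) = leaves a + leaves c"
| "leaves (FOr a c) = leaves a + leaves c"

fun vars :: "form \<Rightarrow> nat set" where
  "vars (Lit i b) = {i}"
| "vars (FAnd a c) = vars a \<union> vars c"
| "vars (FOr a c) = vars a \<union> vars c"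

text \<open>Formula size L(g) on S (infinity if no formula exists).\<close>
definition formL :: "nat \<Rightarrow> bool list set \<Rightarrow> (bool list \<Rightarrow> bool) \<Rightarrow> enat" where
  "formL n S g = Inf {enat (leaves \<phi>) | \<phi>. (\<forall>i\<in>vars \<phi>. i < n) \<and> (\<forall>x\<in>S. evalf \<phi> x = g x)}"

text \<open>Approximate formula size L^eps(f): a distribution alpha over functions (the pushforward
  of the distribution on the index set J).\<close>
definition formLeps :: "nat \<Rightarrow> bool list set \<Rightarrow> real \<Rightarrow> (bool list \<Rightarrow> bool) \<Rightarrow> enat" where
  "formLeps n S \<epsilon> f = Inf {enat s | s. \<exists>\<alpha> :: (bool list \<Rightarrow> bool) pmf.
      (\<forall>g\<in>set_pmf \<alpha>. formL n S g \<le> enat s) \<and>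
      (\<forall>x\<in>S. measure_pmf.prob \<alpha> {g. f x = g x} \<ge> 1 - \<epsilon>)}"

definition pairval :: "nat \<Rightarrow> (bool list \<Rightarrow> nat \<Rightarrow> real) \<Rightarrow> bool list \<Rightarrow> bool list \<Rightarrow> ereal" where
  "pairval n p x y = (let s = (\<Sum>i\<in>{i. i < n \<and> x ! i \<noteq> y ! i}. sqrt (p x i * p y i))
                       in if s = 0 then \<infinity> else ereal (1 / s))"

definition prob_family :: "nat \<Rightarrow> bool list set \<Rightarrow> (bool list \<Rightarrow> nat \<Rightarrow> real) \<Rightarrow> bool" where
  "prob_family n S p \<longleftrightarrow> (\<forall>x\<in>S. (\<forall>i<n. p x i \<ge> 0) \<and> (\<Sum>i<n. p x i) = 1)"

text \<open>sumPI(f); the max over an empty set of pairs is taken to be 0.\<close>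
definition sumPI :: "nat \<Rightarrow> bool list set \<Rightarrow> (bool list \<Rightarrow> bool) \<Rightarrow> ereal" where
  "sumPI n S f = Inf {Sup (insert 0 {pairval n p x y | x y. x \<in> S \<and> y \<in> S \<and> f x \<noteq> f y}) | p.
                        prob_family n S p}"

end

theory Submission
  imports Defs "HOL-Analysis.Analysis"
begin


fun qd :: "form \<Rightarrow> bool list \<Rightarrow> nat \<Rightarrow> real" where
  "qd (Lit j b) x i = (if i = j then 1 else 0)"
| "qd (FAnd a c) x i = (if evalf a x \<and> evalf c x
      then (real (leaves a) * qd a x i + real (leaves c) * qd c x i) / real (leaves a + leaves c)
      else if \<not> evalf a x then qd a x i else qd c x i)"
| "qd (FOr a c) x i = (if \<not> evalf a x \<and> \<not> evalf c x
      then (real (leaves a) * qd a x i + real (leaves c) * qd c x i) / real (leaves a + leaves c)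
      else if evalf a x then qd a x i else qd c x i)"

lemma leaves_pos: "leaves \<phi> \<ge> 1"
  by (induction \<phi>) auto

lemma qd_nonneg: "qd \<phi> x i \<ge> 0"
  by (induction \<phi>) auto

lemma qd_sum: "\<forall>i\<in>vars \<phi>. i < n \<Longrightarrow> (\<Sum>i<n. qd \<phi> x i) = 1"
proof (induction \<phi>)
  case (Lit j b)
  then show ?case by simp
next
  case (FAnd a c)
  have la: "real (leaves a) > 0" "real (leaves c) > 0" using leaves_pos[of a] leaves_pos[of c] by auto
  have "(\<Sum>i<n. (real (leaves a) * qd a x i + real (leaves c) * qd c x i) / real (leaves a + leaves c)) = 1"
    using FAnd la by (simp add: sum_divide_distrib[symmetric] sum.distrib sum_distrib_left[symmetric])
  then show ?case using FAnd by (cases "evalf a x"; cases "evalf c x") simp_all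
next
  case (FOr a c)
  have la: "real (leaves a) > 0" "real (leaves c) > 0" using leaves_pos[of a] leaves_pos[of c] by auto
  have "(\<Sum>i<n. (real (leaves a) * qd a x i + real (leaves c) * qd c x i) / real (leaves a + leaves c)) = 1"
    using FOr la by (simp add: sum_divide_distrib[symmetric] sum.distrib sum_distrib_left[symmetric])
  then show ?case using FOr by (cases "evalf a x"; cases "evalf c x") simp_all
qed

lemma qd_key: "\<not> evalf \<phi> x \<Longrightarrow> evalf \<phi> y \<Longrightarrow>
   \<exists>i\<in>vars \<phi>. x ! i \<noteq> y ! i \<and> qd \<phi> x i * qd \<phi> y i \<ge> 1 / real (leaves \<phi>)"
proof (induction \<phi>)
  case (Lit j b)
  then show ?case by (cases b) auto
next
  case (FAnd a c)
  have la: "real (leaves a) \<ge> 1" "real (leaves c) \<ge> 1" using leaves_pos[of a] leaves_pos[of c] by auto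
  have ya: "evalf a y" "evalf c y" using FAnd by auto
  show ?case
  proof (cases "evalf a x")
    case False
    then obtain i where i: "i \<in> vars a" "x ! i \<noteq> y ! i" "qd a x i * qd a y i \<ge> 1 / real (leaves a)"
      using FAnd ya by auto
    have qy: "qd (FAnd a c) y i \<ge> real (leaves a) * qd a y i / real (leaves a + leaves c)"
      using ya la qd_nonneg[of c y i] by (simp add: divide_right_mono)
    have qx: "qd (FAnd a c) x i = qd a x i" using False by simp
    have "1 / real (leaves (FAnd a c)) = (real (leaves a) * (1 / real (leaves a))) / real (leaves a + leaves c)"
      using la by simp
    also have "\<dots> \<le> real (leaves a) * (qd a x i * qd a y i) / real (leaves a + leaves c)"
      using i(3) la by (intro divide_right_mono mult_left_mono) auto
    also have "\<dots> = qd a x i * (real (leaves a) * qd a y i / real (leaves a + leaves c))" by simp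
    also have "\<dots> \<le> qd (FAnd a c) x i * qd (FAnd a c) y i"
      unfolding qx using qy qd_nonneg[of a x i] by (rule mult_left_mono)
    finally show ?thesis using i by auto
  next
    case True
    then have cx: "\<not> evalf c x" using FAnd by auto
    then obtain i where i: "i \<in> vars c" "x ! i \<noteq> y ! i" "qd c x i * qd c y i \<ge> 1 / real (leaves c)"
      using FAnd ya by auto
    have qy: "qd (FAnd a c) y i \<ge> real (leaves c) * qd c y i / real (leaves a + leaves c)"
      using ya la qd_nonneg[of a y i] by (simp add: divide_right_mono)
    have qx: "qd (FAnd a c) x i = qd c x i" using True cx by simp
    have "1 / real (leaves (FAnd a c)) = (real (leaves c) * (1 / real (leaves c))) / real (leaves a + leaves c)"
      using la by simp
    also have "\<dots> \<le> real (leaves c) * (qd c x i * qd c y i) / real (leaves a + leaves c)"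
      using i(3) la by (intro divide_right_mono mult_left_mono) auto
    also have "\<dots> = qd c x i * (real (leaves c) * qd c y i / real (leaves a + leaves c))" by simp
    also have "\<dots> \<le> qd (FAnd a c) x i * qd (FAnd a c) y i"
      unfolding qx using qy qd_nonneg[of c x i] by (rule mult_left_mono)
    finally show ?thesis using i by auto
  qed
next
  case (FOr a c)
  have la: "real (leaves a) \<ge> 1" "real (leaves c) \<ge> 1" using leaves_pos[of a] leaves_pos[of c] by auto
  have xa: "\<not> evalf a x" "\<not> evalf c x" using FOr by auto
  show ?case
  proof (cases "evalf a y")
    case True
    then obtain i where i: "i \<in> vars a" "x ! i \<noteq> y ! i" "qd a x i * qd a y i \<ge> 1 / real (leaves a)"
      using FOr xa by auto
    have qx: "qd (FOr a c) x i \<ge> real (leaves a) * qd a x i / real (leaves a + leaves c)"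
      using xa la qd_nonneg[of c x i] by (simp add: divide_right_mono)
    have qy: "qd (FOr a c) y i = qd a y i" using True by simp
    have "1 / real (leaves (FOr a c)) = (real (leaves a) * (1 / real (leaves a))) / real (leaves a + leaves c)"
      using la by simp
    also have "\<dots> \<le> real (leaves a) * (qd a x i * qd a y i) / real (leaves a + leaves c)"
      using i(3) la by (intro divide_right_mono mult_left_mono) auto
    also have "\<dots> = (real (leaves a) * qd a x i / real (leaves a + leaves c)) * qd a y i" by simp
    also have "\<dots> \<le> qd (FOr a c) x i * qd (FOr a c) y i"
      unfolding qy using qx qd_nonneg[of a y i] by (rule mult_right_mono)
    finally show ?thesis using i by auto
  next
    case False
    then have cy: "evalf c y" using FOr by auto
    then obtain i where i: "i \<in> vars c" "x ! i \<noteq> y ! i" "qd c x i * qd c y i \<ge> 1 / real (leaves c)"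
      using FOr xa by auto
    have qx: "qd (FOr a c) x i \<ge> real (leaves c) * qd c x i / real (leaves a + leaves c)"
      using xa la qd_nonneg[of a x i] by (simp add: divide_right_mono)
    have qy: "qd (FOr a c) y i = qd c y i" using False cy by simp
    have "1 / real (leaves (FOr a c)) = (real (leaves c) * (1 / real (leaves c))) / real (leaves a + leaves c)"
      using la by simp
    also have "\<dots> \<le> real (leaves c) * (qd c x i * qd c y i) / real (leaves a + leaves c)"
      using i(3) la by (intro divide_right_mono mult_left_mono) auto
    also have "\<dots> = (real (leaves c) * qd c x i / real (leaves a + leaves c)) * qd c y i" by simp
    also have "\<dots> \<le> qd (FOr a c) x i * qd (FOr a c) y i"
      unfolding qy using qx qd_nonneg[of c y i] by (rule mult_right_mono)
    finally show ?thesis using i by auto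
  qed
qed



lemma cs_sqrt:
  fixes w a b :: "'g \<Rightarrow> real"
  assumes "\<And>h. h \<in> G \<Longrightarrow> w h \<ge> 0" "\<And>h. h \<in> G \<Longrightarrow> a h \<ge> 0" "\<And>h. h \<in> G \<Longrightarrow> b h \<ge> 0"
  shows "(\<Sum>h\<in>G. w h * sqrt (a h * b h)) \<le> sqrt ((\<Sum>h\<in>G. w h * a h) * (\<Sum>h\<in>G. w h * b h))"
proof -
  have "(\<Sum>h\<in>G. sqrt (w h * a h) * sqrt (w h * b h))\<^sup>2 \<le> (\<Sum>h\<in>G. (sqrt (w h * a h))\<^sup>2) * (\<Sum>h\<in>G. (sqrt (w h * b h))\<^sup>2)"
    by (rule Cauchy_Schwarz_ineq_sum)
  also have "\<dots> = (\<Sum>h\<in>G. w h * a h) * (\<Sum>h\<in>G. w h * b h)"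
    using assms by (intro arg_cong2[where f="(*)"] sum.cong) auto
  also have "(\<Sum>h\<in>G. sqrt (w h * a h) * sqrt (w h * b h)) = (\<Sum>h\<in>G. w h * sqrt (a h * b h))"
  proof (rule sum.cong)
    fix h assume "h \<in> G"
    then show "sqrt (w h * a h) * sqrt (w h * b h) = w h * sqrt (a h * b h)"
    proof -
      have "sqrt (w h * a h) * sqrt (w h * b h) = sqrt ((w h)\<^sup>2 * (a h * b h))"
        by (simp add: real_sqrt_mult[symmetric] power2_eq_square ac_simps)
      also have "\<dots> = w h * sqrt (a h * b h)"
        using assms(1) \<open>h \<in> G\<close> by (simp add: real_sqrt_mult)
      finally show ?thesis .
    qed
  qed simp
  finally show ?thesis by (rule real_le_rsqrt)
qed

lemma avg_bound:
  fixes w :: "'g \<Rightarrow> real" and a b :: "'g \<Rightarrow> nat \<Rightarrow> real"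
  assumes fG: "finite G" and fD: "finite D"
    and w: "\<And>h. h \<in> G \<Longrightarrow> w h \<ge> 0"
    and a: "\<And>h i. a h i \<ge> 0" and b: "\<And>h i. b h i \<ge> 0"
    and Good: "Good \<subseteq> G" and c: "(\<Sum>h\<in>Good. w h) \<ge> c"
    and s: "s > 0"
    and key: "\<And>h. h \<in> Good \<Longrightarrow> \<exists>i\<in>D. a h i * b h i \<ge> 1 / s"
  shows "(\<Sum>i\<in>D. sqrt ((\<Sum>h\<in>G. w h * a h i) * (\<Sum>h\<in>G. w h * b h i))) \<ge> c / sqrt s"
proof -
  have "c / sqrt s \<le> (\<Sum>h\<in>Good. w h) / sqrt s"
    using c s by (simp add: divide_right_mono)
  also have "\<dots> = (\<Sum>h\<in>Good. w h * (1 / sqrt s))" by (simp add: sum_divide_distrib)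
  also have "\<dots> \<le> (\<Sum>h\<in>Good. w h * (\<Sum>i\<in>D. sqrt (a h i * b h i)))"
  proof (rule sum_mono)
    fix h assume hG: "h \<in> Good"
    then obtain i where i: "i \<in> D" "a h i * b h i \<ge> 1 / s" using key by blast
    have "1 / sqrt s = sqrt (1 / s)" by (simp add: real_sqrt_divide)
    also have "\<dots> \<le> sqrt (a h i * b h i)" using i by simp
    also have "\<dots> \<le> (\<Sum>i\<in>D. sqrt (a h i * b h i))"
      using i fD a b by (intro member_le_sum) auto
    finally show "w h * (1 / sqrt s) \<le> w h * (\<Sum>i\<in>D. sqrt (a h i * b h i))"
      using w hG Good by (intro mult_left_mono) auto
  qed
  also have "\<dots> \<le> (\<Sum>h\<in>G. w h * (\<Sum>i\<in>D. sqrt (a h i * b h i)))"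
    using Good fG w a b by (intro sum_mono2) (auto intro!: sum_nonneg mult_nonneg_nonneg)
  also have "\<dots> = (\<Sum>i\<in>D. \<Sum>h\<in>G. w h * sqrt (a h i * b h i))"
    by (simp add: sum_distrib_left sum.swap[of _ G D])
  also have "\<dots> \<le> (\<Sum>i\<in>D. sqrt ((\<Sum>h\<in>G. w h * a h i) * (\<Sum>h\<in>G. w h * b h i)))"
    using w a b by (intro sum_mono cs_sqrt) auto
  finally show ?thesis .
qed



lemma formL_cong: "(\<And>x. x \<in> S \<Longrightarrow> g x = h x) \<Longrightarrow> formL n S g = formL n S h"
  unfolding formL_def by simp

lemma formL_le_obtain:
  assumes "formL n S g \<le> enat s"
  obtains \<phi> where "\<forall>i\<in>vars \<phi>. i < n" "\<forall>x\<in>S. evalf \<phi> x = g x" "leaves \<phi> \<le> s"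
proof -
  let ?A = "{enat (leaves \<phi>) | \<phi>. (\<forall>i\<in>vars \<phi>. i < n) \<and> (\<forall>x\<in>S. evalf \<phi> x = g x)}"
  have "?A \<noteq> {}"
  proof
    assume e: "?A = {}"
    have "formL n S g = \<infinity>" unfolding formL_def e by (simp add: top_enat_def)
    then show False using assms by simp
  qed
  then obtain a where a: "a \<in> ?A" by blast
  have l: "(LEAST x. x \<in> ?A) \<in> ?A" using a by (rule LeastI)
  have "Inf ?A = (LEAST x. x \<in> ?A)" using \<open>?A \<noteq> {}\<close> by (simp only: Inf_enat_def if_False)
  then have "Inf ?A \<in> ?A" using l by simp
  then obtain \<phi> where "(\<forall>i\<in>vars \<phi>. i < n)" "(\<forall>x\<in>S. evalf \<phi> x = g x)" "Inf ?A = enat (leaves \<phi>)"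
    by blast
  then show ?thesis using that assms unfolding formL_def by auto
qed

lemma finite_funs:
  assumes "finite S"
  shows "finite {h :: 'a \<Rightarrow> bool. \<forall>x. x \<notin> S \<longrightarrow> \<not> h x}"
proof -
  have "{h :: 'a \<Rightarrow> bool. \<forall>x. x \<notin> S \<longrightarrow> \<not> h x} \<subseteq> (\<lambda>T x. x \<in> T) ` Pow S"
  proof
    fix h :: "'a \<Rightarrow> bool" assume "h \<in> {h. \<forall>x. x \<notin> S \<longrightarrow> \<not> h x}"
    then have "h = (\<lambda>x. x \<in> {x\<in>S. h x})" "{x\<in>S. h x} \<in> Pow S" by auto
    then show "h \<in> (\<lambda>T x. x \<in> T) ` Pow S" by blast
  qed
  then show ?thesis using finite_subset finite_imageI finite_Pow_iff assms by blast
qed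

lemma bound_one:
  fixes n :: nat and S :: "bool list set" and f :: "bool list \<Rightarrow> bool" and \<epsilon> :: real
    and \<alpha> :: "(bool list \<Rightarrow> bool) pmf"
  assumes Sn: "S \<subseteq> {x. length x = n}" and eps: "\<epsilon> < 1/2"
    and H1: "\<forall>g\<in>set_pmf \<alpha>. formL n S g \<le> enat s"
    and H2: "\<forall>x\<in>S. measure_pmf.prob \<alpha> {g. f x = g x} \<ge> 1 - \<epsilon>"
  shows "(ereal (1 - 2 * \<epsilon>) * sumPI n S f) ^ 2 \<le> ereal (real s)"
proof -
  have finS: "finite S"
    by (rule finite_subset[OF Sn]) (use finite_lists_length_eq[of "UNIV :: bool set" n] in simp)
  define r where "r g = (\<lambda>x. if x \<in> S then g x else False)" for g :: "bool list \<Rightarrow> bool"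
  define \<beta> where "\<beta> = map_pmf r \<alpha>"
  define G where "G = set_pmf \<beta>"
  define w where "w = pmf \<beta>"
  have GG: "G = r ` set_pmf \<alpha>" unfolding G_def \<beta>_def by simp
  have finG: "finite G"
    by (rule finite_subset[OF _ finite_funs[OF finS]]) (auto simp: GG r_def)
  have rS: "x \<in> S \<Longrightarrow> r g x = g x" for g x by (simp add: r_def)
  have HG: "formL n S h \<le> enat s" if hG: "h \<in> G" for h
  proof -
    obtain g where g: "g \<in> set_pmf \<alpha>" "h = r g" using hG GG by auto
    have "formL n S h = formL n S g" using g(2) by (intro formL_cong) (simp add: rS)
    then show ?thesis using H1 g by simp
  qed
  have "\<exists>\<phi>. (\<forall>i\<in>vars \<phi>. i < n) \<and> (\<forall>x\<in>S. evalf \<phi> x = h x) \<and> leaves \<phi> \<le> s" if "h \<in> G" for h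
    using formL_le_obtain[OF HG[OF that]] by metis
  then obtain \<phi> where \<phi>: "\<And>h. h \<in> G \<Longrightarrow> (\<forall>i\<in>vars (\<phi> h). i < n) \<and> (\<forall>x\<in>S. evalf (\<phi> h) x = h x) \<and> leaves (\<phi> h) \<le> s"
    by metis
  have Gne: "G \<noteq> {}" unfolding G_def by (simp add: set_pmf_not_empty)
  then obtain h0 where "h0 \<in> G" by blast
  then have spos: "real s \<ge> 1" using \<phi>[of h0] leaves_pos[of "\<phi> h0"] by auto
  have w0: "w h \<ge> 0" for h unfolding w_def by simp
  have wsum: "(\<Sum>h\<in>G. w h) = 1" unfolding w_def G_def by (rule sum_pmf_eq_1) (auto simp: finG[unfolded G_def])
  have wbad: "(\<Sum>h\<in>G - {h. f x = h x}. w h) \<le> \<epsilon>" if xS: "x \<in> S" for x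
  proof -
    have "measure_pmf.prob \<beta> {h. f x = h x} = measure_pmf.prob \<alpha> {g. f x = g x}"
      unfolding \<beta>_def using xS by (simp add: vimage_def rS)
    moreover have "measure_pmf.prob \<beta> {h. f x = h x} = (\<Sum>h\<in>G \<inter> {h. f x = h x}. w h)"
      unfolding w_def G_def
      by (subst measure_Int_set_pmf[symmetric], subst measure_measure_pmf_finite)
        (auto simp: Int_commute finG[unfolded G_def])
    moreover have "(\<Sum>h\<in>G. w h) = (\<Sum>h\<in>G \<inter> {h. f x = h x}. w h) + (\<Sum>h\<in>G - {h. f x = h x}. w h)"
      by (rule sum.Int_Diff[OF finG])
    ultimately show ?thesis using H2 xS wsum by auto
  qed
  define p where "p x i = (\<Sum>h\<in>G. w h * qd (\<phi> h) x i)" for x i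
  have pf: "prob_family n S p"
    unfolding prob_family_def
  proof (intro ballI conjI allI impI)
    fix x i show "p x i \<ge> 0" unfolding p_def using w0 qd_nonneg by (auto intro!: sum_nonneg)
  next
    fix x
    have "(\<Sum>i<n. p x i) = (\<Sum>h\<in>G. w h * (\<Sum>i<n. qd (\<phi> h) x i))"
      unfolding p_def by (simp add: sum_distrib_left sum.swap[of _ G])
    also have "\<dots> = (\<Sum>h\<in>G. w h)" using \<phi> qd_sum by (intro sum.cong) auto
    finally show "(\<Sum>i<n. p x i) = 1" using wsum by simp
  qed
  define T where "T = sqrt (real s) / (1 - 2 * \<epsilon>)"
  have ce: "1 - 2 * \<epsilon> > 0" using eps by simp
  have pv: "pairval n p x y \<le> ereal T" if xy: "x \<in> S" "y \<in> S" "f x \<noteq> f y" for x y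
  proof -
    define D where "D = {i. i < n \<and> x ! i \<noteq> y ! i}"
    define Good where "Good = {h\<in>G. f x = h x \<and> f y = h y}"
    have "G - Good \<subseteq> (G - {h. f x = h x}) \<union> (G - {h. f y = h y})" unfolding Good_def by auto
    then have "(\<Sum>h\<in>G - Good. w h) \<le> (\<Sum>h\<in>(G - {h. f x = h x}) \<union> (G - {h. f y = h y}). w h)"
      using finG w0 by (intro sum_mono2) auto
    also have "\<dots> \<le> (\<Sum>h\<in>G - {h. f x = h x}. w h) + (\<Sum>h\<in>G - {h. f y = h y}. w h)"
      using finG w0 by (simp add: sum_Un sum_nonneg)
    also have "\<dots> \<le> 2 * \<epsilon>" using wbad[OF xy(1)] wbad[OF xy(2)] by linarith
    finally have bad: "(\<Sum>h\<in>G - Good. w h) \<le> 2 * \<epsilon>" .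
    have "(\<Sum>h\<in>G. w h) = (\<Sum>h\<in>Good. w h) + (\<Sum>h\<in>G - Good. w h)"
      using sum.subset_diff[of Good G w] finG unfolding Good_def by auto
    then have gsum: "(\<Sum>h\<in>Good. w h) \<ge> 1 - 2 * \<epsilon>" using bad wsum by simp
    have key: "\<exists>i\<in>D. qd (\<phi> h) x i * qd (\<phi> h) y i \<ge> 1 / real s" if hG: "h \<in> Good" for h
    proof -
      have hG': "h \<in> G" using hG Good_def by auto
      have ev: "evalf (\<phi> h) x = f x" "evalf (\<phi> h) y = f y" using \<phi>[OF hG'] hG xy unfolding Good_def by auto
      have "\<exists>i\<in>vars (\<phi> h). x ! i \<noteq> y ! i \<and> qd (\<phi> h) x i * qd (\<phi> h) y i \<ge> 1 / real (leaves (\<phi> h))"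
      proof (cases "f x")
        case False
        then show ?thesis using qd_key[of "\<phi> h" x y] ev xy by auto
      next
        case True
        then obtain i where "i\<in>vars (\<phi> h)" "y ! i \<noteq> x ! i" "qd (\<phi> h) y i * qd (\<phi> h) x i \<ge> 1 / real (leaves (\<phi> h))"
          using qd_key[of "\<phi> h" y x] ev xy by auto
        then show ?thesis by (auto simp: mult.commute)
      qed
      then obtain i where i: "i\<in>vars (\<phi> h)" "x ! i \<noteq> y ! i" "qd (\<phi> h) x i * qd (\<phi> h) y i \<ge> 1 / real (leaves (\<phi> h))"
        by blast
      have "1 / real s \<le> 1 / real (leaves (\<phi> h))"
        using \<phi>[OF hG'] leaves_pos[of "\<phi> h"] by (intro divide_left_mono) auto
      then show ?thesis using i \<phi>[OF hG'] unfolding D_def by force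
    qed
    have finD: "finite D" unfolding D_def by simp
    have lb: "(\<Sum>i\<in>D. sqrt (p x i * p y i)) \<ge> (1 - 2 * \<epsilon>) / sqrt (real s)"
      unfolding p_def
      by (rule avg_bound[OF finG finD _ qd_nonneg qd_nonneg _ gsum _ key])
        (use w0 spos Good_def in auto)
    have pos: "(1 - 2 * \<epsilon>) / sqrt (real s) > 0" using ce spos by simp
    have "1 / (\<Sum>i\<in>D. sqrt (p x i * p y i)) \<le> 1 / ((1 - 2 * \<epsilon>) / sqrt (real s))"
    proof (rule divide_left_mono)
      have "0 < (\<Sum>i\<in>D. sqrt (p x i * p y i))" using lb pos by linarith
      then show "0 < (\<Sum>i\<in>D. sqrt (p x i * p y i)) * ((1 - 2 * \<epsilon>) / sqrt (real s))"
        using pos by (rule mult_pos_pos)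
    qed (use lb in auto)
    also have "\<dots> = T" unfolding T_def by simp
    finally show ?thesis using lb pos unfolding pairval_def D_def[symmetric] Let_def by auto
  qed
  have sup: "Sup (insert 0 {pairval n p x y | x y. x \<in> S \<and> y \<in> S \<and> f x \<noteq> f y}) \<le> ereal T"
    using pv T_def ce by (auto intro!: Sup_least)
  have le: "sumPI n S f \<le> ereal T"
    unfolding sumPI_def using pf by (intro Inf_lower2[OF _ sup]) auto
  have ge: "sumPI n S f \<ge> 0"
    unfolding sumPI_def by (auto intro!: Inf_greatest Sup_upper)
  obtain t where t: "sumPI n S f = ereal t" "0 \<le> t" "t \<le> T"
    using le ge by (cases "sumPI n S f") auto
  have "((1 - 2 * \<epsilon>) * t) ^ 2 \<le> ((1 - 2 * \<epsilon>) * T) ^ 2"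
    using t ce by (intro power_mono mult_left_mono) auto
  also have "\<dots> = real s" unfolding T_def using ce by simp
  finally show ?thesis using t by simp
qed


theorem mainTheorem2:
  fixes n :: nat and S :: "bool list set" and f :: "bool list \<Rightarrow> bool" and \<epsilon> :: real
  assumes "S \<subseteq> {x. length x = n}"
    and "\<epsilon> < 1/2"
  shows "ereal_of_enat (formLeps n S \<epsilon> f) \<ge> (ereal (1 - 2 * \<epsilon>) * sumPI n S f) ^ 2"
proof -
  let ?A = "{enat s | s. \<exists>\<alpha> :: (bool list \<Rightarrow> bool) pmf.
      (\<forall>g\<in>set_pmf \<alpha>. formL n S g \<le> enat s) \<and>
      (\<forall>x\<in>S. measure_pmf.prob \<alpha> {g. f x = g x} \<ge> 1 - \<epsilon>)}"
  have fl: "formLeps n S \<epsilon> f = Inf ?A" unfolding formLeps_def by simp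
  show ?thesis
  proof (cases "?A = {}")
    case True
    have "Inf ?A = \<infinity>" unfolding True by (simp add: top_enat_def)
    then show ?thesis unfolding fl by simp
  next
    case False
    then obtain a where a: "a \<in> ?A" by blast
    have l: "(LEAST x. x \<in> ?A) \<in> ?A" using a by (rule LeastI)
    have "Inf ?A = (LEAST x. x \<in> ?A)" using False by (simp only: Inf_enat_def if_False)
    then have "Inf ?A \<in> ?A" using l by simp
    then obtain s \<alpha> where s: "Inf ?A = enat s"
      "\<forall>g\<in>set_pmf \<alpha>. formL n S g \<le> enat s"
      "\<forall>x\<in>S. measure_pmf.prob \<alpha> {g. f x = g x} \<ge> 1 - \<epsilon>" by blast
    have "(ereal (1 - 2 * \<epsilon>) * sumPI n S f) ^ 2 \<le> ereal (real s)"
      by (rule bound_one[OF assms s(2,3)])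
    then show ?thesis unfolding fl s(1) by simp
  qed
qed

end
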